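(* Let $\Omega\subset\mathbb{R}^N$ be a bounded strictly convex domain having an interior tangent ball at every point of $\partial\Omega$. Let $\mu_1>0$ and $\psi_1\in C(\overline\Omega)$ with $\psi_1>0$ in $\Omega$, $\psi_1=0$ on $\partial\Omega$, $-\lambda_N(D^2\psi_1)=\mu_1\psi_1$ in $\Omega$ (viscosity sense), and let $\varphi_1\in C(\overline\Omega)$ with $\varphi_1<0$ in $\Omega$, $\varphi_1=0$ on $\partial\Omega$, $-\lambda_1(D^2\varphi_1)=\mu_1\varphi_1$ in $\Omega$; assume $\|\psi_1\|_\infty=\|\varphi_1\|_\infty=1$. Then there exists $C>0$ such that for all $x\in\Omega$, \[ \psi_1(x)\ge C\operatorname{dist}(x,\partial\Omega)\quad\text{and}\quad \varphi_1(x)\le -C\operatorname{dist}(x,\partial\Omega). \]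
   Context: $\lambda_1(A)$ and $\lambda_N(A)$ are the smallest and largest eigenvalues of a symmetric matrix $A$. The equations are understood in the viscosity sense. *)

theory Defs
  imports "HOL-Analysis.Analysis"
begin

definition eigenvalues :: "real^'n^'n \<Rightarrow> real set" where
  "eigenvalues A = {c. \<exists>v. v \<noteq> 0 \<and> A *v v = c *\<^sub>R v}"

definition lambda_min :: "real^'n^'n \<Rightarrow> real" where
  "lambda_min A = Inf (eigenvalues A)"

definition lambda_max :: "real^'n^'n \<Rightarrow> real" where
  "lambda_max A = Sup (eigenvalues A)"

definition C2_hess :: "(real^'n \<Rightarrow> real) \<Rightarrow> real^'n \<Rightarrow> real^'n^'n \<Rightarrow> bool" where
  "C2_hess phi x0 X \<longleftrightarrow>
     (\<exists>e>0. \<exists>g H. X = H x0 \<and> continuous_on (ball x0 e) H \<and>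
        (\<forall>x\<in>ball x0 e. (phi has_derivative (\<lambda>h. g x \<bullet> h)) (at x) \<and>
                        (g has_derivative (\<lambda>h. H x *v h)) (at x)))"

(* Viscosity solution of  F(D^2 u, u) = 0 in Omega, with F(X,r) = -lam X - mu r
   (degenerate elliptic when lam is monotone). *)
definition visc_sub :: "(real^'n^'n \<Rightarrow> real) \<Rightarrow> real \<Rightarrow> (real^'n) set \<Rightarrow> (real^'n \<Rightarrow> real) \<Rightarrow> bool" where
  "visc_sub lam mu \<Omega> u \<longleftrightarrow>
     (\<forall>x0\<in>\<Omega>. \<forall>phi X. C2_hess phi x0 X \<longrightarrow>
        (\<exists>r>0. \<forall>x\<in>ball x0 r \<inter> \<Omega>. u x - phi x \<le> u x0 - phi x0) \<longrightarrow>
        - lam X \<le> mu * u x0)"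

definition visc_super :: "(real^'n^'n \<Rightarrow> real) \<Rightarrow> real \<Rightarrow> (real^'n) set \<Rightarrow> (real^'n \<Rightarrow> real) \<Rightarrow> bool" where
  "visc_super lam mu \<Omega> u \<longleftrightarrow>
     (\<forall>x0\<in>\<Omega>. \<forall>phi X. C2_hess phi x0 X \<longrightarrow>
        (\<exists>r>0. \<forall>x\<in>ball x0 r \<inter> \<Omega>. u x - phi x \<ge> u x0 - phi x0) \<longrightarrow>
        - lam X \<ge> mu * u x0)"

definition visc_sol :: "(real^'n^'n \<Rightarrow> real) \<Rightarrow> real \<Rightarrow> (real^'n) set \<Rightarrow> (real^'n \<Rightarrow> real) \<Rightarrow> bool" where
  "visc_sol lam mu \<Omega> u \<longleftrightarrow> continuous_on \<Omega> u \<and> visc_sub lam mu \<Omega> u \<and> visc_super lam mu \<Omega> u"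

definition strictly_convex_dom :: "(real^'n) set \<Rightarrow> bool" where
  "strictly_convex_dom \<Omega> \<longleftrightarrow>
     (\<forall>x\<in>closure \<Omega>. \<forall>y\<in>closure \<Omega>. x \<noteq> y \<longrightarrow> open_segment x y \<subseteq> \<Omega>)"

definition interior_ball_condition :: "(real^'n) set \<Rightarrow> bool" where
  "interior_ball_condition \<Omega> \<longleftrightarrow>
     (\<forall>y\<in>frontier \<Omega>. \<exists>z r. r > 0 \<and> ball z r \<subseteq> \<Omega> \<and> dist z y = r)"

end

theory Submission
  imports Defs
begin


definition outer :: "real^'n \<Rightarrow> real^'n^'n" where
  "outer e = (\<chi> i j. e$i * e$j)"

lemma outer_mult: "outer e *v h = (e \<bullet> h) *\<^sub>R e"
  by (simp add: outer_def vec_eq_iff matrix_vector_mult_def inner_vec_def sum_distrib_left mult.commute mult.left_commute)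

definition Pm :: "real \<Rightarrow> real^'n \<Rightarrow> real^'n^'n" where
  "Pm k e = k *\<^sub>R (mat 1 - outer e)"

lemma Pm_mult: "Pm k e *v h = k *\<^sub>R (h - (e \<bullet> h) *\<^sub>R e)"
  by (simp add: Pm_def outer_mult matrix_vector_mult_diff_rdistrib flip: scaleR_matrix_vector_assoc)

lemma Pm_eig_sign:
  assumes "norm e = 1" "Pm k e *v v = c *\<^sub>R v" "v \<noteq> 0"
  shows "c * (v \<bullet> v) = k * (v \<bullet> v - (e \<bullet> v)^2)"
proof -
  have "c * (v \<bullet> v) = (c *\<^sub>R v) \<bullet> v" by simp
  also have "\<dots> = (k *\<^sub>R (v - (e \<bullet> v) *\<^sub>R e)) \<bullet> v" using assms(2) Pm_mult by metis
  also have "\<dots> = k * (v \<bullet> v - (e \<bullet> v)^2)" by (simp add: inner_diff_left power2_eq_square inner_commute algebra_simps)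
  finally show ?thesis .
qed

lemma cs_unit: assumes "norm e = 1" shows "(e \<bullet> v)^2 \<le> v \<bullet> v"
proof -
  have "\<bar>e \<bullet> v\<bar> \<le> norm e * norm v" by (rule Cauchy_Schwarz_ineq2)
  hence "\<bar>e \<bullet> v\<bar> \<le> norm v" using assms by simp
  hence "(e \<bullet> v)^2 \<le> (norm v)^2" by (metis abs_ge_zero power2_abs power_mono)
  thus ?thesis by (simp add: power2_norm_eq_inner)
qed

lemma Pm_zero_eig: assumes "norm e = 1" shows "0 \<in> eigenvalues (Pm k e)"
proof -
  have "e \<noteq> 0" using assms by auto
  moreover have "Pm k e *v e = 0 *\<^sub>R e" using assms by (simp add: Pm_mult inner_commute dot_square_norm)
  ultimately show ?thesis unfolding eigenvalues_def by blast
qed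

lemma lambda_max_Pm: assumes "norm e = 1" "k \<le> 0" shows "lambda_max (Pm k e) = 0"
proof -
  have "\<forall>c\<in>eigenvalues (Pm k e). c \<le> 0"
  proof
    fix c assume "c \<in> eigenvalues (Pm k e)"
    then obtain v where v: "v \<noteq> 0" "Pm k e *v v = c *\<^sub>R v" unfolding eigenvalues_def by blast
    have eq: "c * (v \<bullet> v) = k * (v \<bullet> v - (e \<bullet> v)^2)" by (rule Pm_eig_sign[OF assms(1) v(2) v(1)])
    have "v \<bullet> v > 0" using v(1) by simp
    moreover have "k * (v \<bullet> v - (e \<bullet> v)^2) \<le> 0" using cs_unit[OF assms(1), of v] assms(2) by (simp add: mult_nonpos_nonneg)
    ultimately show "c \<le> 0" using eq by (smt (verit) mult_pos_pos)
  qed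
  thus ?thesis unfolding lambda_max_def using Pm_zero_eig[OF assms(1)] by (intro cSup_eq_maximum) auto
qed

lemma lambda_min_Pm: assumes "norm e = 1" "k \<ge> 0" shows "lambda_min (Pm k e) = 0"
proof -
  have "\<forall>c\<in>eigenvalues (Pm k e). c \<ge> 0"
  proof
    fix c assume "c \<in> eigenvalues (Pm k e)"
    then obtain v where v: "v \<noteq> 0" "Pm k e *v v = c *\<^sub>R v" unfolding eigenvalues_def by blast
    have eq: "c * (v \<bullet> v) = k * (v \<bullet> v - (e \<bullet> v)^2)" by (rule Pm_eig_sign[OF assms(1) v(2) v(1)])
    have "v \<bullet> v > 0" using v(1) by simp
    moreover have "k * (v \<bullet> v - (e \<bullet> v)^2) \<ge> 0" using cs_unit[OF assms(1), of v] assms(2) by simp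
    ultimately show "c \<ge> 0" using eq by (smt (verit) mult_neg_pos)
  qed
  thus ?thesis unfolding lambda_min_def using Pm_zero_eig[OF assms(1)] by (intro cInf_eq_minimum) auto
qed

definition qf :: "real^'n \<Rightarrow> real^'n \<Rightarrow> real \<Rightarrow> real \<Rightarrow> real \<Rightarrow> real^'n \<Rightarrow> real" where
  "qf a e c s K x = c + s * ((x - a) \<bullet> e) - K * ((x - a) \<bullet> (x - a) - ((x - a) \<bullet> e)^2)"

lemma C2_qf: "C2_hess (qf a e c s K) x0 (Pm (-2*K) e)"
  unfolding C2_hess_def
proof (intro exI[of _ 1] conjI exI[of _ "\<lambda>x. s *\<^sub>R e - (2*K) *\<^sub>R ((x - a) - ((x - a) \<bullet> e) *\<^sub>R e)"]
    exI[of _ "\<lambda>x. Pm (-2*K) e"] ballI)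
  show "continuous_on (ball x0 1) (\<lambda>x. Pm (-2*K) e)" by simp
  fix x
  show "(qf a e c s K has_derivative (\<lambda>h. (s *\<^sub>R e - (2*K) *\<^sub>R ((x - a) - ((x - a) \<bullet> e) *\<^sub>R e)) \<bullet> h)) (at x)"
    unfolding qf_def
    apply (rule derivative_eq_intros refl | simp)+
    apply (rule ext)
    apply (simp add: inner_diff_left inner_diff_right inner_commute algebra_simps power2_eq_square)
    done
  show "((\<lambda>x. s *\<^sub>R e - (2*K) *\<^sub>R ((x - a) - ((x - a) \<bullet> e) *\<^sub>R e)) has_derivative (\<lambda>h. Pm (-2*K) e *v h)) (at x)"
    apply (rule derivative_eq_intros refl | simp)+
    apply (rule ext)
    apply (simp add: Pm_mult inner_commute algebra_simps)
    done
qed simp_all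



lemma concave_seg:
  fixes u :: "real^'n \<Rightarrow> real" and \<Omega> :: "(real^'n) set"
  assumes opn: "open \<Omega>" and cont: "continuous_on \<Omega> u"
    and seg: "closed_segment a b \<subseteq> \<Omega>" and ab: "a \<noteq> b" and nonfull: "- \<Omega> \<noteq> {}"
    and e_def: "e = (1 / norm (b - a)) *\<^sub>R (b - a)"
    and P: "\<And>x0 c s K. x0 \<in> \<Omega> \<Longrightarrow> K > 0 \<Longrightarrow>
        (\<exists>r>0. \<forall>x\<in>ball x0 r \<inter> \<Omega>. u x - qf a e c s K x \<ge> u x0 - qf a e c s K x0) \<Longrightarrow> False"
    and t: "0 \<le> t" "t \<le> 1"
  shows "u (a + t *\<^sub>R (b - a)) \<ge> (1 - t) * u a + t * u b"
proof (rule ccontr)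
  assume neg: "\<not> ?thesis"
  define L where "L = norm (b - a)"
  have L: "L > 0" using ab by (simp add: L_def)
  have ne: "norm e = 1" using L by (simp add: e_def L_def)
  have ba: "b - a = L *\<^sub>R e" using L by (simp add: e_def L_def)
  define \<tau> where "\<tau> x = (x - a) \<bullet> e" for x
  define \<rho> where "\<rho> x = (x - a) \<bullet> (x - a) - (\<tau> x)^2" for x
  define s where "s = (u b - u a) / L"
  define p where "p = a + t *\<^sub>R (b - a)"
  have ee: "e \<bullet> e = 1" using ne by (simp add: dot_square_norm)
  have \<rho>nn: "\<rho> x \<ge> 0" for x unfolding \<rho>_def \<tau>_def using cs_unit[OF ne, of "x - a"] by (simp add: inner_commute)
  have distz: "(dist (a + \<tau> x *\<^sub>R e) x)^2 = \<rho> x" for x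
    unfolding \<rho>_def \<tau>_def dist_norm power2_norm_eq_inner
    by (simp add: inner_diff_left inner_diff_right inner_commute ee algebra_simps power2_eq_square)
  have dista: "\<tau> x = 0 \<Longrightarrow> (dist x a)^2 = \<rho> x" for x
    unfolding \<rho>_def dist_norm power2_norm_eq_inner by simp
  have distb: "\<tau> x = L \<Longrightarrow> (dist x b)^2 = \<rho> x" for x
  proof -
    assume h: "\<tau> x = L"
    define y where "y = x - a"
    have "x - b = y - L *\<^sub>R e" using ba unfolding y_def by (simp add: algebra_simps)
    hence "(dist x b)^2 = (y - L *\<^sub>R e) \<bullet> (y - L *\<^sub>R e)"
      unfolding dist_norm power2_norm_eq_inner by simp
    also have "\<dots> = y \<bullet> y - 2 * L * (y \<bullet> e) + L^2"
      by (simp add: inner_diff_left inner_diff_right inner_commute ee algebra_simps power2_eq_square)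
    finally have "(dist x b)^2 = (x - a) \<bullet> (x - a) - 2 * L * \<tau> x + L^2" unfolding y_def \<tau>_def .
    thus ?thesis using h unfolding \<rho>_def by (simp add: power2_eq_square)
  qed
  have qf_eq: "u x - qf a e (u a) s K x = u x - (u a + s * \<tau> x) + K * \<rho> x" for x K
    unfolding qf_def \<tau>_def \<rho>_def by simp
  have \<tau>p: "\<tau> p = t * L" unfolding \<tau>_def p_def ba using ee by simp
  have \<rho>p: "\<rho> p = 0" unfolding \<rho>_def \<tau>p unfolding p_def ba using ee by (simp add: power2_eq_square)
  have lp: "u a + s * \<tau> p = (1 - t) * u a + t * u b" using L unfolding \<tau>p s_def by (simp add: field_simps)
  define m where "m = u a + s * \<tau> p - u p"
  have m: "m > 0" using neg lp unfolding m_def p_def by simp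
  obtain x1 y1 where xy: "x1 \<in> closed_segment a b" "y1 \<in> - \<Omega>" "dist x1 y1 = setdist (closed_segment a b) (- \<Omega>)"
    using setdist_compact_closed[of "closed_segment a b" "- \<Omega>"] opn nonfull by auto
  define \<delta> where "\<delta> = setdist (closed_segment a b) (- \<Omega>)"
  have \<delta>: "\<delta> > 0" using xy seg unfolding \<delta>_def by (metis ComplD dist_pos_lt subsetD)
  have inO: "z \<in> closed_segment a b \<Longrightarrow> dist z x < \<delta> \<Longrightarrow> x \<in> \<Omega>" for z x
    using setdist_le_dist[of z "closed_segment a b" x "- \<Omega>"] unfolding \<delta>_def by fastforce
  have aO: "a \<in> \<Omega>" and bO: "b \<in> \<Omega>" using seg by auto
  obtain r1 where r1: "r1 > 0" "\<And>x. x \<in> \<Omega> \<Longrightarrow> dist x a < r1 \<Longrightarrow> dist (u x) (u a) < m/2"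
    using cont aO m unfolding continuous_on_iff by (meson half_gt_zero)
  obtain r2 where r2: "r2 > 0" "\<And>x. x \<in> \<Omega> \<Longrightarrow> dist x b < r2 \<Longrightarrow> dist (u x) (u b) < m/2"
    using cont bO m unfolding continuous_on_iff by (meson half_gt_zero)
  define r where "r = min \<delta> (min r1 r2) / 2"
  have r: "r > 0" "r < \<delta>" "r < r1" "r < r2" using \<delta> r1 r2 unfolding r_def by auto
  define T where "T = {x. 0 \<le> \<tau> x \<and> \<tau> x \<le> L \<and> \<rho> x \<le> r^2}"
  have ct: "continuous_on UNIV \<tau>" "continuous_on UNIV \<rho>"
    unfolding \<tau>_def[abs_def] \<rho>_def[abs_def] by (intro continuous_intros)+
  have sq_le: "\<rho> x \<le> r^2 \<Longrightarrow> d^2 = \<rho> x \<Longrightarrow> d \<ge> 0 \<Longrightarrow> d \<le> r" for x d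
    using r(1) by (metis less_imp_le power2_le_imp_le)
  have TO: "T \<subseteq> \<Omega>"
  proof
    fix x assume x: "x \<in> T"
    have "a + \<tau> x *\<^sub>R e \<in> closed_segment a b"
    proof -
      have "a + \<tau> x *\<^sub>R e = a + (\<tau> x / L) *\<^sub>R (b - a)" using L ba by simp
      moreover have "0 \<le> \<tau> x / L" "\<tau> x / L \<le> 1" using x L unfolding T_def by auto
      ultimately show ?thesis unfolding closed_segment_def
        by (intro CollectI exI[of _ "\<tau> x / L"]) (simp add: algebra_simps)
    qed
    moreover have "dist (a + \<tau> x *\<^sub>R e) x < \<delta>"
      using sq_le[of x "dist (a + \<tau> x *\<^sub>R e) x"] distz[of x] x r unfolding T_def by force
    ultimately show "x \<in> \<Omega>" by (rule inO)
  qed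
  have Tcl: "closed T" unfolding T_def
    using ct by (intro closed_Collect_conj closed_Collect_le continuous_on_const) auto
  have Tbd: "bounded T"
  proof -
    have "norm (x - a) \<le> sqrt (r^2 + L^2)" if "x \<in> T" for x
    proof -
      have "\<tau> x ^2 \<le> L^2" using that unfolding T_def by (simp add: power_mono)
      hence "(norm (x - a))^2 \<le> r^2 + L^2" using that unfolding T_def \<rho>_def power2_norm_eq_inner mem_Collect_eq by linarith
      thus ?thesis by (simp add: real_le_rsqrt)
    qed
    hence "T \<subseteq> cball a (sqrt (r^2 + L^2))" by (auto simp: dist_norm norm_minus_commute)
    thus ?thesis using bounded_subset bounded_cball by blast
  qed
  have Tc: "compact T" using Tcl Tbd by (simp add: compact_eq_bounded_closed)
  have pT: "p \<in> T" unfolding T_def using \<tau>p \<rho>p t L by (simp add: mult_left_le_one_le)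
  have cuT: "continuous_on T (\<lambda>x. u x - (u a + s * \<tau> x))"
    using cont TO ct by (intro continuous_intros continuous_on_subset[OF cont TO] continuous_on_subset[OF ct(1)]) auto
  obtain M where M: "\<And>x. x \<in> T \<Longrightarrow> \<bar>u x - (u a + s * \<tau> x)\<bar> \<le> M"
    using compact_continuous_image[OF cuT Tc] unfolding compact_eq_bounded_closed bounded_iff by auto
  have M0: "M \<ge> 0" using M[OF pT] by simp
  define K where "K = (M + 1) / r^2"
  have K: "K > 0" using M0 r by (simp add: K_def)
  have Kr: "K * r^2 = M + 1" using r by (simp add: K_def)
  define w where "w x = u x - (u a + s * \<tau> x) + K * \<rho> x" for x
  have cw: "continuous_on T w" unfolding w_def
    by (intro continuous_intros cuT continuous_on_subset[OF ct(2)]) auto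
  obtain x0 where x0: "x0 \<in> T" "\<And>y. y \<in> T \<Longrightarrow> w x0 \<le> w y"
    using continuous_attains_inf[OF Tc _ cw] pT by blast
  have wx0: "w x0 \<le> - m" using x0(2)[OF pT] unfolding w_def m_def \<rho>p by simp
  have x0O: "x0 \<in> \<Omega>" using x0 TO by auto
  have t1: "\<tau> x0 \<noteq> 0"
  proof
    assume h: "\<tau> x0 = 0"
    have "dist x0 a \<le> r" using sq_le[of x0 "dist x0 a"] dista[OF h] x0(1) unfolding T_def by auto
    hence "dist (u x0) (u a) < m/2" using r r1(2)[OF x0O] by auto
    moreover have "K * \<rho> x0 \<ge> 0" using K \<rho>nn[of x0] by simp
    ultimately have "w x0 > - m/2" unfolding w_def h dist_real_def abs_less_iff by simp
    thus False using wx0 m by simp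
  qed
  have t2: "\<tau> x0 \<noteq> L"
  proof
    assume h: "\<tau> x0 = L"
    have "dist x0 b \<le> r" using sq_le[of x0 "dist x0 b"] distb[OF h] x0(1) unfolding T_def by auto
    hence "dist (u x0) (u b) < m/2" using r r2(2)[OF x0O] by auto
    moreover have "u a + s * \<tau> x0 = u b" using h L unfolding s_def by simp
    moreover have "K * \<rho> x0 \<ge> 0" using K \<rho>nn[of x0] by simp
    ultimately have "w x0 > - m/2" unfolding w_def dist_real_def abs_less_iff by simp
    thus False using wx0 m by simp
  qed
  have t3: "\<rho> x0 \<noteq> r^2"
  proof
    assume h: "\<rho> x0 = r^2"
    have "w x0 \<ge> -M + K * r^2" unfolding w_def h using M[OF x0(1)] by linarith
    thus False using Kr wx0 m by simp
  qed
  define V where "V = {x. 0 < \<tau> x \<and> \<tau> x < L \<and> \<rho> x < r^2}"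
  have Vo: "open V" unfolding V_def using ct
    by (intro open_Collect_conj open_Collect_less continuous_on_const) auto
  have x0V: "x0 \<in> V" using x0(1) t1 t2 t3 unfolding V_def T_def by auto
  have VT: "V \<subseteq> T" unfolding V_def T_def by auto
  obtain \<epsilon> where \<epsilon>: "\<epsilon> > 0" "ball x0 \<epsilon> \<subseteq> V" using Vo x0V open_contains_ball by blast
  show False
  proof (rule P[OF x0O K, of "u a" s])
    show "\<exists>r>0. \<forall>x\<in>ball x0 r \<inter> \<Omega>. u x - qf a e (u a) s K x \<ge> u x0 - qf a e (u a) s K x0"
      using \<epsilon> VT x0(2) unfolding qf_eq w_def[symmetric] by blast
  qed
qed



lemma lower_bound:
  fixes u :: "real^'n \<Rightarrow> real" and \<Omega> :: "(real^'n) set"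
  assumes opn: "open \<Omega>" and bd: "bounded \<Omega>" and sc: "strictly_convex_dom \<Omega>"
    and conc: "\<And>a b t. a \<in> \<Omega> \<Longrightarrow> b \<in> \<Omega> \<Longrightarrow> 0 \<le> t \<Longrightarrow> t \<le> 1 \<Longrightarrow>
         u (a + t *\<^sub>R (b - a)) \<ge> (1 - t) * u a + t * u b"
    and pos: "\<And>x. x \<in> \<Omega> \<Longrightarrow> u x > 0" and le1: "\<And>x. x \<in> \<Omega> \<Longrightarrow> u x \<le> 1"
    and x0: "x0 \<in> \<Omega>" "u x0 = 1" and D: "D > 0" "\<And>y. y \<in> closure \<Omega> \<Longrightarrow> dist x0 y \<le> D"
    and x: "x \<in> \<Omega>"
  shows "u x \<ge> infdist x (frontier \<Omega>) / D"
proof -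
  have frontier_subset_closure: "frontier \<Omega> \<subseteq> closure \<Omega>" by (auto simp: frontier_def)
  show ?thesis
proof (cases "x = x0")
  case True
  have "\<Omega> \<noteq> UNIV" using bd not_bounded_UNIV by auto
  then obtain y where y: "y \<in> frontier \<Omega>" using frontier_not_empty[of \<Omega>] x by blast
  have "infdist x (frontier \<Omega>) \<le> dist x y" using y by (rule infdist_le)
  also have "\<dots> \<le> D" using D(2)[of y] y True frontier_subset_closure by blast
  finally show ?thesis using True x0 D by simp
next
  case False
  define R where "R = (\<lambda>t. x0 + t *\<^sub>R (x - x0)) ` {1..}"
  have cR: "connected R" unfolding R_def
    by (intro connected_continuous_image continuous_intros) (simp add: is_interval_connected is_interval_ci)
  have xR: "x \<in> R \<inter> \<Omega>" unfolding R_def using x by (auto intro!: image_eqI[of _ _ 1])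
  obtain B where B: "\<And>y. y \<in> \<Omega> \<Longrightarrow> norm y \<le> B" using bd unfolding bounded_iff by blast
  have nx: "norm (x - x0) > 0" using False by simp
  define t1 where "t1 = (\<bar>B\<bar> + norm x0 + 1) / norm (x - x0) + 1"
  have t1: "t1 \<ge> 1" unfolding t1_def using nx by simp
  have "norm (x0 + t1 *\<^sub>R (x - x0)) \<ge> t1 * norm (x - x0) - norm x0"
    using norm_triangle_ineq2[of "t1 *\<^sub>R (x - x0)" "- x0"] t1 by (simp add: add.commute)
  moreover have "t1 * norm (x - x0) = \<bar>B\<bar> + norm x0 + 1 + norm (x - x0)"
    unfolding t1_def using nx by (simp add: field_simps)
  ultimately have "norm (x0 + t1 *\<^sub>R (x - x0)) > B" using nx by linarith
  hence "x0 + t1 *\<^sub>R (x - x0) \<in> R - \<Omega>" unfolding R_def using t1 B by force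
  then obtain y where yR: "y \<in> R" and yF: "y \<in> frontier \<Omega>"
    using connected_Int_frontier[OF cR, of \<Omega>] xR by blast
  then obtain T where T: "T \<ge> 1" "y = x0 + T *\<^sub>R (x - x0)" unfolding R_def by auto
  have FO: "frontier \<Omega> \<inter> \<Omega> = {}" using opn by (auto simp: frontier_def interior_open)
  have T1: "T > 1"
  proof (rule ccontr)
    assume "\<not> T > 1" hence "T = 1" using T by simp
    hence "y = x" using T by simp
    thus False using yF x FO by blast
  qed
  have yc: "y \<in> closure \<Omega>" using yF frontier_subset_closure by blast
  have x0y: "x0 \<noteq> y" using yF x0 FO by blast
  have seg: "open_segment x0 y \<subseteq> \<Omega>" using sc yc x0 x0y closure_subset unfolding strictly_convex_dom_def by blast
  have key: "u x \<ge> 1 - 1/t" if t: "1 < t" "t < T" for t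
  proof -
    define z where "z = x0 + t *\<^sub>R (x - x0)"
    have "z = (1 - t/T) *\<^sub>R x0 + (t/T) *\<^sub>R y" unfolding z_def T(2) using T1
      by (simp add: algebra_simps)
    moreover have "0 < t/T" "t/T < 1" using t T1 by auto
    ultimately have "z \<in> open_segment x0 y" unfolding in_segment using x0y by blast
    hence zO: "z \<in> \<Omega>" using seg by blast
    have "x = x0 + (1/t) *\<^sub>R (z - x0)" unfolding z_def using t by simp
    hence "u x \<ge> (1 - 1/t) * u x0 + (1/t) * u z" using conc[OF x0(1) zO, of "1/t"] t by simp
    moreover have "(1/t) * u z \<ge> 0" using pos[OF zO] t by simp
    ultimately show ?thesis using x0(2) by simp
  qed
  have uT: "u x \<ge> 1 - 1/T"
  proof (rule ccontr)
    assume h: "\<not> ?thesis"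
    have "1/T > 0" using T1 by simp
    hence ux: "0 < u x" "u x < 1" using pos[OF x] h by linarith+
    define q where "q = 1 / (1 - u x)"
    have q1: "q > 1" unfolding q_def using ux by (simp add: field_simps)
    have "1 - u x > 1 / T" using h by simp
    hence qT: "q < T" unfolding q_def using ux T1 by (simp add: field_simps)
    define t where "t = (q + T) / 2"
    have "u x \<ge> 1 - 1/t" using key[of t] q1 qT unfolding t_def by simp
    moreover have "1/t < 1/q" using q1 qT unfolding t_def by (intro divide_strict_left_mono) auto
    moreover have "1 - 1/q = u x" unfolding q_def using ux by simp
    ultimately show False by simp
  qed
  have "infdist x (frontier \<Omega>) \<le> dist x y" using yF by (rule infdist_le)
  also have "dist x y = (T - 1) * norm (x - x0)" unfolding T(2) dist_norm
  proof -
    have "x - (x0 + T *\<^sub>R (x - x0)) = (1 - T) *\<^sub>R (x - x0)" by (simp add: algebra_simps)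
    thus "norm (x - (x0 + T *\<^sub>R (x - x0))) = (T - 1) * norm (x - x0)" using T1 by simp
  qed
  finally have i1: "infdist x (frontier \<Omega>) \<le> (T - 1) * norm (x - x0)" .
  have "dist x0 y = T * norm (x - x0)" unfolding T(2) dist_norm using T1 by simp
  hence i2: "T * norm (x - x0) \<le> D" using D(2)[OF yc] by simp
  have "infdist x (frontier \<Omega>) / D \<le> ((T - 1) * norm (x - x0)) / (T * norm (x - x0))"
  proof -
    have "infdist x (frontier \<Omega>) / D \<le> ((T - 1) * norm (x - x0)) / D" using i1 D by (simp add: divide_right_mono)
    also have "\<dots> \<le> ((T - 1) * norm (x - x0)) / (T * norm (x - x0))"
      using i2 T1 nx D(1) by (intro divide_left_mono) auto
    finally show ?thesis .
  qed
  also have "\<dots> = 1 - 1/T" using nx T1 by (simp add: field_simps)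
  finally show ?thesis using uT by simp
qed
qed



lemma max_point:
  fixes u :: "real^'n \<Rightarrow> real" and \<Omega> :: "(real^'n) set"
  assumes opn: "open \<Omega>" and bd: "bounded \<Omega>" and ne: "\<Omega> \<noteq> {}"
    and cont: "continuous_on (closure \<Omega>) u" and fr: "\<forall>x\<in>frontier \<Omega>. u x = 0"
    and sup: "(SUP x\<in>closure \<Omega>. \<bar>u x\<bar>) = 1"
  shows "\<exists>x0\<in>\<Omega>. \<bar>u x0\<bar> = 1 \<and> (\<forall>x\<in>closure \<Omega>. \<bar>u x\<bar> \<le> 1)"
proof -
  have cc: "compact (closure \<Omega>)" using bd by (simp add: compact_closure)
  have cne: "closure \<Omega> \<noteq> {}" using ne by simp
  have ca: "continuous_on (closure \<Omega>) (\<lambda>x. \<bar>u x\<bar>)" using cont by (intro continuous_intros)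
  obtain x0 where x0: "x0 \<in> closure \<Omega>" "\<And>y. y \<in> closure \<Omega> \<Longrightarrow> \<bar>u y\<bar> \<le> \<bar>u x0\<bar>"
    using continuous_attains_sup[OF cc cne ca] by blast
  have "(SUP x\<in>closure \<Omega>. \<bar>u x\<bar>) = \<bar>u x0\<bar>"
    using x0 by (intro cSup_eq_maximum) auto
  hence u1: "\<bar>u x0\<bar> = 1" using sup by simp
  have "x0 \<notin> frontier \<Omega>" using fr u1 by auto
  hence "x0 \<in> \<Omega>" using x0(1) opn by (auto simp: frontier_def interior_open)
  thus ?thesis using u1 x0(2) by auto
qed

lemma seg_in:
  fixes \<Omega> :: "(real^'n) set"
  assumes sc: "strictly_convex_dom \<Omega>" and a: "a \<in> \<Omega>" and b: "b \<in> \<Omega>"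
  shows "closed_segment a b \<subseteq> \<Omega>"
proof (cases "a = b")
  case True thus ?thesis using a by simp
next
  case False
  have "open_segment a b \<subseteq> \<Omega>" using sc a b False closure_subset unfolding strictly_convex_dom_def by blast
  thus ?thesis using a b unfolding open_segment_def by blast
qed

theorem lemma3p3:
  fixes \<Omega> :: "(real^'n) set" and \<psi>1 \<phi>1 :: "real^'n \<Rightarrow> real" and \<mu>1 :: real
  assumes "open \<Omega>" and "connected \<Omega>" and "\<Omega> \<noteq> {}" and "bounded \<Omega>"
    and "strictly_convex_dom \<Omega>" and "interior_ball_condition \<Omega>"
    and "\<mu>1 > 0"
    and "continuous_on (closure \<Omega>) \<psi>1" and "\<forall>x\<in>\<Omega>. \<psi>1 x > 0"
    and "\<forall>x\<in>frontier \<Omega>. \<psi>1 x = 0"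
    and "visc_sol lambda_max \<mu>1 \<Omega> \<psi>1"
    and "continuous_on (closure \<Omega>) \<phi>1" and "\<forall>x\<in>\<Omega>. \<phi>1 x < 0"
    and "\<forall>x\<in>frontier \<Omega>. \<phi>1 x = 0"
    and "visc_sol lambda_min \<mu>1 \<Omega> \<phi>1"
    and "(SUP x\<in>closure \<Omega>. \<bar>\<psi>1 x\<bar>) = 1" and "(SUP x\<in>closure \<Omega>. \<bar>\<phi>1 x\<bar>) = 1"
  shows "\<exists>C>0. \<forall>x\<in>\<Omega>. \<psi>1 x \<ge> C * infdist x (frontier \<Omega>) \<and>
                       \<phi>1 x \<le> - C * infdist x (frontier \<Omega>)"
proof -
  note opn = assms(1) and bd = assms(4) and sc = assms(5) and mu = assms(7)
  have nonfull: "- \<Omega> \<noteq> {}"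
  proof
    assume "- \<Omega> = {}" hence "\<Omega> = UNIV" by auto
    thus False using bd not_bounded_UNIV[where 'a="real^'n"] by simp
  qed
  have cpsi: "continuous_on \<Omega> \<psi>1" using assms(8) closure_subset continuous_on_subset by blast
  have cphi: "continuous_on \<Omega> \<phi>1" using assms(12) closure_subset continuous_on_subset by blast
  have super: "visc_super lambda_max \<mu>1 \<Omega> \<psi>1" using assms(11) by (simp add: visc_sol_def)
  have sub: "visc_sub lambda_min \<mu>1 \<Omega> \<phi>1" using assms(15) by (simp add: visc_sol_def)
  have conc: "\<psi>1 (a + t *\<^sub>R (b - a)) \<ge> (1 - t) * \<psi>1 a + t * \<psi>1 b"
    if ab: "a \<in> \<Omega>" "b \<in> \<Omega>" and t: "0 \<le> t" "t \<le> 1" for a b t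
  proof (cases "a = b")
    case True thus ?thesis by (simp add: algebra_simps)
  next
    case False
    define e where "e = (1 / norm (b - a)) *\<^sub>R (b - a)"
    have ne: "norm e = 1" using False by (simp add: e_def)
    show ?thesis
    proof (rule concave_seg[OF opn cpsi seg_in[OF sc ab] False nonfull e_def _ t])
      fix x0 c s K
      assume x0: "x0 \<in> \<Omega>" and K: "(K::real) > 0"
        and loc: "\<exists>r>0. \<forall>x\<in>ball x0 r \<inter> \<Omega>. \<psi>1 x - qf a e c s K x \<ge> \<psi>1 x0 - qf a e c s K x0"
      have "- lambda_max (Pm (-2*K) e) \<ge> \<mu>1 * \<psi>1 x0"
        using super x0 C2_qf[of a e c s K x0] loc unfolding visc_super_def by blast
      moreover have "lambda_max (Pm (-2*K) e) = 0" using ne K by (intro lambda_max_Pm) auto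
      moreover have "\<mu>1 * \<psi>1 x0 > 0" using mu assms(9) x0 by simp
      ultimately show False by simp
    qed
  qed
  have conv: "- \<phi>1 (a + t *\<^sub>R (b - a)) \<ge> (1 - t) * - \<phi>1 a + t * - \<phi>1 b"
    if ab: "a \<in> \<Omega>" "b \<in> \<Omega>" and t: "0 \<le> t" "t \<le> 1" for a b t
  proof (cases "a = b")
    case True thus ?thesis by (simp add: algebra_simps)
  next
    case False
    define e where "e = (1 / norm (b - a)) *\<^sub>R (b - a)"
    have ne: "norm e = 1" using False by (simp add: e_def)
    have cm: "continuous_on \<Omega> (\<lambda>x. - \<phi>1 x)" using cphi by (intro continuous_intros)
    show ?thesis
    proof (rule concave_seg[OF opn cm seg_in[OF sc ab] False nonfull e_def _ t])
      fix x0 c s K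
      assume x0: "x0 \<in> \<Omega>" and K: "(K::real) > 0"
        and loc: "\<exists>r>0. \<forall>x\<in>ball x0 r \<inter> \<Omega>. - \<phi>1 x - qf a e c s K x \<ge> - \<phi>1 x0 - qf a e c s K x0"
      have qneg: "qf a e (-c) (-s) (-K) x = - qf a e c s K x" for x unfolding qf_def by simp
      have loc': "\<exists>r>0. \<forall>x\<in>ball x0 r \<inter> \<Omega>. \<phi>1 x - qf a e (-c) (-s) (-K) x \<le> \<phi>1 x0 - qf a e (-c) (-s) (-K) x0"
        using loc unfolding qneg by (smt (verit))
      have "- lambda_min (Pm (-2*(-K)) e) \<le> \<mu>1 * \<phi>1 x0"
        using sub x0 C2_qf[of a e "-c" "-s" "-K" x0] loc' unfolding visc_sub_def by blast
      moreover have "lambda_min (Pm (-2*(-K)) e) = 0" using ne K by (intro lambda_min_Pm) auto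
      moreover have "\<mu>1 * \<phi>1 x0 < 0" using mu assms(13) x0 by (simp add: mult_pos_neg)
      ultimately show False by simp
    qed
  qed
  obtain x0 where x0: "x0 \<in> \<Omega>" "\<bar>\<psi>1 x0\<bar> = 1" "\<forall>x\<in>closure \<Omega>. \<bar>\<psi>1 x\<bar> \<le> 1"
    using max_point[OF opn bd assms(3) assms(8) assms(10) assms(16)] by blast
  obtain z0 where z0: "z0 \<in> \<Omega>" "\<bar>\<phi>1 z0\<bar> = 1" "\<forall>x\<in>closure \<Omega>. \<bar>\<phi>1 x\<bar> \<le> 1"
    using max_point[OF opn bd assms(3) assms(12) assms(14) assms(17)] by blast
  have px0: "\<psi>1 x0 = 1" using x0 assms(9) by auto
  have pz0: "- \<phi>1 z0 = 1" using z0 assms(13) by auto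
  define D where "D = diameter (closure \<Omega>) + 1"
  have bc: "bounded (closure \<Omega>)" using bd by (rule bounded_closure)
  have D: "D > 0" unfolding D_def using diameter_ge_0[OF bc] by simp
  have Dle: "dist p y \<le> D" if "p \<in> closure \<Omega>" "y \<in> closure \<Omega>" for p y
    using diameter_bounded_bound[OF bc that] unfolding D_def by simp
  have le1: "\<psi>1 x \<le> 1" "- \<phi>1 x \<le> 1" if "x \<in> \<Omega>" for x
    using x0(3) z0(3) that closure_subset by (auto simp: abs_le_iff)
  show ?thesis
  proof (intro exI[of _ "1/D"] conjI ballI)
    show "1/D > 0" using D by simp
    fix x assume x: "x \<in> \<Omega>"
    have "\<psi>1 x \<ge> infdist x (frontier \<Omega>) / D"
      by (rule lower_bound[OF opn bd sc conc _ _ x0(1) px0 D _ x])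
         (use assms(9) le1 Dle[of x0] x0(1) closure_subset[of \<Omega>] in auto)
    thus "\<psi>1 x \<ge> 1/D * infdist x (frontier \<Omega>)" by simp
    have "- \<phi>1 x \<ge> infdist x (frontier \<Omega>) / D"
      by (rule lower_bound[where u = "\<lambda>x. - \<phi>1 x", OF opn bd sc conv _ _ z0(1) pz0 D _ x])
         (use assms(13) le1 Dle[of z0] z0(1) closure_subset[of \<Omega>] in auto)
    thus "\<phi>1 x \<le> - (1/D) * infdist x (frontier \<Omega>)" by simp
  qed
qed

end
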